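(* If $\varphi \in \mathcal L_\Diamond$ is valid over the class of all dynamical systems, then ${\sf ITL}^0_\Diamond \vdash \varphi$.
   Context: $\mathcal L_\Diamond$ is the language built from a countably infinite set of propositional variables and $\bot$ using $\wedge,\vee,\to$, the modality ${\circ}$ ("next") and the modality $\Diamond$ ("eventually"); $\neg\varphi$ abbreviates $\varphi\to\bot$. A dynamical (topological) system is a triple $(X,\mathcal T,f)$ with $(X,\mathcal T)$ a topological space and $f\colon X\to X$ continuous. A valuation $\llbracket\cdot\rrbracket$ assigns an open set to each formula with $\llbracket\bot\rrbracket=\varnothing$, $\llbracket\varphi\wedge\psi\rrbracket=\llbracket\varphi\rrbracket\cap\llbracket\psi\rrbracket$, $\llbracket\varphi\vee\psi\rrbracket=\llbracket\varphi\rrbracket\cup\llbracket\psi\rrbracket$, $\llbracket\varphi\to\psi\rrbracket=\big((X\setminus\llbracket\varphi\rrbracket)\cup\llbracket\psi\rrbracket\big)^\circ$ (interior), $\llbracket{\circ}\varphi\rrbracket=f^{-1}\llbracket\varphi\rrbracket$, $\llbracket\Diamond\varphi\rrbracket=\bigcup_{n<\omega}f^{-n}\llbracket\varphi\rrbracket$. A formula is valid over the class of dynamical systems if $\llbracket\varphi\rrbracket=X$ for every dynamical system and every valuation on it. The logic ${\sf ITL}^0_\Diamond$ is the least set of $\mathcal L_\Diamond$-formulas containing all axioms of intuitionistic propositional logic and the axioms $\neg{\circ}\bot$; ${\circ}\varphi\wedge{\circ}\psi\to{\circ}(\varphi\wedge\psi)$; ${\circ}(\varphi\vee\psi)\to{\circ}\varphi\vee{\circ}\psi$;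 ${\circ}(\varphi\to\psi)\to({\circ}\varphi\to{\circ}\psi)$; $\varphi\vee{\circ}\Diamond\varphi\to\Diamond\varphi$, and closed under modus ponens (from $\varphi$ and $\varphi\to\psi$ infer $\psi$), necessitation (from $\varphi$ infer ${\circ}\varphi$), the rule from $\varphi\to\psi$ infer $\Diamond\varphi\to\Diamond\psi$, and the induction rule from ${\circ}\varphi\to\varphi$ infer $\Diamond\varphi\to\varphi$. (Note that the Fischer Servi axiom $({\circ}\varphi\to{\circ}\psi)\to{\circ}(\varphi\to\psi)$ is not included.) *)

theory Defs
  imports "HOL-Analysis.Abstract_Topology"
begin

datatype fm =
    Var nat
  | Bot
  | And fm fm
  | Or fm fm
  | Imp fm fm
  | Next fm
  | Diam fm

definition Neg :: "fm \<Rightarrow> fm" where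
  "Neg \<phi> = Imp \<phi> Bot"

definition dynamical_system :: "'a topology \<Rightarrow> ('a \<Rightarrow> 'a) \<Rightarrow> bool" where
  "dynamical_system T f \<longleftrightarrow> continuous_map T T f"

fun sem :: "'a topology \<Rightarrow> ('a \<Rightarrow> 'a) \<Rightarrow> (nat \<Rightarrow> 'a set) \<Rightarrow> fm \<Rightarrow> 'a set" where
  "sem T f V (Var p) = V p"
| "sem T f V Bot = {}"
| "sem T f V (And \<phi> \<psi>) = sem T f V \<phi> \<inter> sem T f V \<psi>"
| "sem T f V (Or \<phi> \<psi>) = sem T f V \<phi> \<union> sem T f V \<psi>"
| "sem T f V (Imp \<phi> \<psi>) = T interior_of ((topspace T - sem T f V \<phi>) \<union> sem T f V \<psi>)"
| "sem T f V (Next \<phi>) = {x \<in> topspace T. f x \<in> sem T f V \<phi>}"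
| "sem T f V (Diam \<phi>) = (\<Union>n. {x \<in> topspace T. (f ^^ n) x \<in> sem T f V \<phi>})"

definition valid_over :: "'a itself \<Rightarrow> fm \<Rightarrow> bool" where
  "valid_over (_ :: 'a itself) \<phi> \<longleftrightarrow>
     (\<forall>(T :: 'a topology) f V. dynamical_system T f \<longrightarrow> (\<forall>p. openin T (V p))
        \<longrightarrow> sem T f V \<phi> = topspace T)"

inductive prov :: "fm \<Rightarrow> bool" where
  ax_K:  "prov (Imp \<phi> (Imp \<psi> \<phi>))"
| ax_S:  "prov (Imp (Imp \<phi> (Imp \<psi> \<chi>)) (Imp (Imp \<phi> \<psi>) (Imp \<phi> \<chi>)))"
| ax_conjE1: "prov (Imp (And \<phi> \<psi>) \<phi>)"
| ax_conjE2: "prov (Imp (And \<phi> \<psi>) \<psi>)"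
| ax_conjI: "prov (Imp \<phi> (Imp \<psi> (And \<phi> \<psi>)))"
| ax_disjI1: "prov (Imp \<phi> (Or \<phi> \<psi>))"
| ax_disjI2: "prov (Imp \<psi> (Or \<phi> \<psi>))"
| ax_disjE: "prov (Imp (Imp \<phi> \<chi>) (Imp (Imp \<psi> \<chi>) (Imp (Or \<phi> \<psi>) \<chi>)))"
| ax_efq: "prov (Imp Bot \<phi>)"
| ax_next_bot: "prov (Neg (Next Bot))"
| ax_next_and: "prov (Imp (And (Next \<phi>) (Next \<psi>)) (Next (And \<phi> \<psi>)))"
| ax_next_or: "prov (Imp (Next (Or \<phi> \<psi>)) (Or (Next \<phi>) (Next \<psi>)))"
| ax_next_K: "prov (Imp (Next (Imp \<phi> \<psi>)) (Imp (Next \<phi>) (Next \<psi>)))"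
| ax_diam_fix: "prov (Imp (Or \<phi> (Next (Diam \<phi>))) (Diam \<phi>))"
| mp: "prov \<phi> \<Longrightarrow> prov (Imp \<phi> \<psi>) \<Longrightarrow> prov \<psi>"
| nec: "prov \<phi> \<Longrightarrow> prov (Next \<phi>)"
| diam_mono: "prov (Imp \<phi> \<psi>) \<Longrightarrow> prov (Imp (Diam \<phi>) (Diam \<psi>))"
| ind: "prov (Imp (Next \<phi>) \<phi>) \<Longrightarrow> prov (Imp (Diam \<phi>) \<phi>)"

end

theory Submission
  imports Defs
begin

lemma prov_refl: "prov (Imp a a)"
proof -
  have 1: "prov (Imp (Imp a (Imp (Imp a a) a)) (Imp (Imp a (Imp a a)) (Imp a a)))" by (rule ax_S)
  have 2: "prov (Imp a (Imp (Imp a a) a))" by (rule ax_K)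
  have 3: "prov (Imp (Imp a (Imp a a)) (Imp a a))" using mp[OF 2 1] .
  show ?thesis using mp[OF ax_K 3] .
qed

inductive der :: "fm set \<Rightarrow> fm \<Rightarrow> bool" where
  hyp: "a \<in> G \<Longrightarrow> der G a"
| ax: "prov a \<Longrightarrow> der G a"
| dmp: "der G a \<Longrightarrow> der G (Imp a b) \<Longrightarrow> der G b"

lemma der_mono: "der G a \<Longrightarrow> G \<subseteq> H \<Longrightarrow> der H a"
  by (induction rule: der.induct) (auto intro: der.intros)

lemma deduction: "der (insert a G) b \<Longrightarrow> der G (Imp a b)"
proof (induction "insert a G" b rule: der.induct)
  case (hyp b)
  then show ?case
  proof
    assume "b = a" then show ?thesis using prov_refl der.ax by simp
  next
    assume "b \<in> G" then show ?thesis by (meson ax_K der.ax der.dmp der.hyp)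
  qed
next
  case (ax b)
  then show ?case by (meson ax_K der.ax der.dmp)
next
  case (dmp c b)
  have "der G (Imp (Imp a (Imp c b)) (Imp (Imp a c) (Imp a b)))" by (rule der.ax, rule ax_S)
  then show ?case using dmp by (meson der.dmp)
qed

lemma der_empty: "der G a \<Longrightarrow> G = {} \<Longrightarrow> prov a"
  by (induction rule: der.induct) (auto intro: prov.mp)

lemma der_compact: "der G a \<Longrightarrow> \<exists>F. finite F \<and> F \<subseteq> G \<and> der F a"
proof (induction rule: der.induct)
  case (hyp a G)
  then show ?case by (rule_tac x="{a}" in exI) (auto intro: der.hyp)
next
  case (ax a G)
  then show ?case by (rule_tac x="{}" in exI) (auto intro: der.ax)
next
  case (dmp G a b)
  then obtain F1 F2 where "finite F1" "F1 \<subseteq> G" "der F1 a" "finite F2" "F2 \<subseteq> G" "der F2 (Imp a b)" by blast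
  then show ?case
    by (rule_tac x="F1 \<union> F2" in exI) (meson der.dmp der_mono finite_UnI sup.bounded_iff sup_ge1 sup_ge2)
qed

definition pr :: "fm set \<Rightarrow> bool" where
  "pr G \<longleftrightarrow> (\<forall>a. der G a \<longrightarrow> a \<in> G) \<and> Bot \<notin> G \<and> (\<forall>a b. Or a b \<in> G \<longrightarrow> a \<in> G \<or> b \<in> G)"

lemma lindenbaum:
  assumes "\<not> der G b"
  shows "\<exists>D. G \<subseteq> D \<and> pr D \<and> b \<notin> D"
proof -
  let ?A = "{D. G \<subseteq> D \<and> \<not> der D b}"
  have "?A \<noteq> {}" using assms by blast
  moreover have "\<Union>C \<in> ?A" if "C \<noteq> {}" "subset.chain ?A C" for C
  proof -
    have "G \<subseteq> \<Union>C" using that unfolding subset.chain_def by blast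
    moreover have "\<not> der (\<Union>C) b"
    proof
      assume "der (\<Union>C) b"
      then obtain F where F: "finite F" "F \<subseteq> \<Union>C" "der F b" using der_compact by blast
      have "\<exists>D\<in>C. F \<subseteq> D"
        using F(1,2)
      proof (induction F rule: finite_induct)
        case empty then show ?case using that(1) by blast
      next
        case (insert x F)
        then obtain D where D: "D \<in> C" "F \<subseteq> D" by blast
        obtain D' where D': "D' \<in> C" "x \<in> D'" using insert by blast
        have "D \<subseteq> D' \<or> D' \<subseteq> D" using that(2) D D' unfolding subset.chain_def by blast
        then show ?case using D D' by blast
      qed
      then obtain D where "D \<in> C" "F \<subseteq> D" by blast
      then have "der D b" using F der_mono by blast
      then show False using \<open>D \<in> C\<close> that(2) unfolding subset.chain_def by blast
    qed
    ultimately show ?thesis by blast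
  qed
  ultimately obtain M where M: "M \<in> ?A" and max: "\<forall>X\<in>?A. M \<subseteq> X \<longrightarrow> X = M"
    using subset_Zorn_nonempty[of ?A] by blast
  have ins: "der (insert c M) b" if "c \<notin> M" for c
  proof (rule ccontr)
    assume "\<not> der (insert c M) b"
    then have "insert c M \<in> ?A" using M by blast
    then show False using max that by blast
  qed
  have closed: "\<forall>a. der M a \<longrightarrow> a \<in> M"
  proof (intro allI impI)
    fix a assume "der M a"
    show "a \<in> M"
    proof (rule ccontr)
      assume "a \<notin> M"
      then have "der M (Imp a b)" using ins deduction by blast
      then have "der M b" using \<open>der M a\<close> der.dmp by blast
      then show False using M by blast
    qed
  qed
  have "Bot \<notin> M"
  proof
    assume "Bot \<in> M"
    then have "der M b" by (meson ax_efq der.ax der.dmp der.hyp)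
    then show False using M by blast
  qed
  moreover have "\<forall>a c. Or a c \<in> M \<longrightarrow> a \<in> M \<or> c \<in> M"
  proof (intro allI impI)
    fix a c assume o: "Or a c \<in> M"
    show "a \<in> M \<or> c \<in> M"
    proof (rule ccontr)
      assume "\<not> (a \<in> M \<or> c \<in> M)"
      then have "der M (Imp a b)" "der M (Imp c b)" using ins deduction by blast+
      moreover have "der M (Imp (Imp a b) (Imp (Imp c b) (Imp (Or a c) b)))" by (rule der.ax, rule ax_disjE)
      ultimately have "der M b" using o by (meson der.dmp der.hyp)
      then show False using M by blast
    qed
  qed
  moreover have "b \<notin> M" using M der.hyp by blast
  ultimately show ?thesis using M closed unfolding pr_def by blast
qed

lemma pr_der: "pr G \<Longrightarrow> der G a \<Longrightarrow> a \<in> G"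
  unfolding pr_def by blast

lemma pr_prov: "pr G \<Longrightarrow> prov a \<Longrightarrow> a \<in> G"
  using pr_der der.ax by blast

lemma pr_mp: "pr G \<Longrightarrow> a \<in> G \<Longrightarrow> Imp a b \<in> G \<Longrightarrow> b \<in> G"
  using pr_der der.hyp der.dmp by meson

lemma pr_impI: "pr G \<Longrightarrow> prov (Imp a b) \<Longrightarrow> a \<in> G \<Longrightarrow> b \<in> G"
  using pr_mp pr_prov by blast

lemma pr_bot: "pr G \<Longrightarrow> Bot \<notin> G"
  unfolding pr_def by blast

lemma pr_and: "pr G \<Longrightarrow> And a b \<in> G \<longleftrightarrow> a \<in> G \<and> b \<in> G"
  by (meson ax_conjE1 ax_conjE2 ax_conjI pr_impI pr_mp)

lemma pr_or: "pr G \<Longrightarrow> Or a b \<in> G \<longleftrightarrow> a \<in> G \<or> b \<in> G"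
proof
  assume "pr G" "Or a b \<in> G" then show "a \<in> G \<or> b \<in> G" unfolding pr_def by blast
next
  assume "pr G" "a \<in> G \<or> b \<in> G" then show "Or a b \<in> G" using ax_disjI1 ax_disjI2 pr_impI by blast
qed

lemma pr_imp_weak: "pr G \<Longrightarrow> b \<in> G \<Longrightarrow> Imp a b \<in> G"
  by (meson ax_K pr_impI)

lemma canon_imp:
  assumes "pr G"
  shows "Imp a b \<notin> G \<longleftrightarrow> (\<exists>D. G \<subseteq> D \<and> pr D \<and> a \<in> D \<and> b \<notin> D)"
proof
  assume "Imp a b \<notin> G"
  then have "\<not> der (insert a G) b" using deduction pr_der[OF assms] by blast
  then obtain D where "insert a G \<subseteq> D" "pr D" "b \<notin> D" using lindenbaum by blast
  then show "\<exists>D. G \<subseteq> D \<and> pr D \<and> a \<in> D \<and> b \<notin> D" by blast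
next
  assume "\<exists>D. G \<subseteq> D \<and> pr D \<and> a \<in> D \<and> b \<notin> D"
  then show "Imp a b \<notin> G" using pr_mp by blast
qed

lemma prov_from_pr:
  assumes "\<And>G. pr G \<Longrightarrow> a \<in> G \<Longrightarrow> b \<in> G"
  shows "prov (Imp a b)"
proof (rule ccontr)
  assume "\<not> prov (Imp a b)"
  then have "\<not> der {a} b" using deduction der_empty by fastforce
  then obtain D where "{a} \<subseteq> D" "pr D" "b \<notin> D" using lindenbaum by blast
  then show False using assms by blast
qed

lemma exists_pr_not: "\<not> prov a \<Longrightarrow> \<exists>D. pr D \<and> a \<notin> D"
  using lindenbaum der_empty by blast

definition fnext :: "fm set \<Rightarrow> fm set" where
  "fnext G = {a. Next a \<in> G}"

lemma pr_fnext: assumes "pr G" shows "pr (fnext G)"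
proof -
  have "Next a \<in> G" if "der (fnext G) a" for a
    using that
  proof (induction "fnext G" a rule: der.induct)
    case (hyp a) then show ?case by (simp add: fnext_def)
  next
    case (ax a) then show ?case using assms nec pr_prov by blast
  next
    case (dmp a b)
    then show ?case using assms ax_next_K pr_impI pr_mp by blast
  qed
  moreover have "Next Bot \<notin> G"
    using assms ax_next_bot pr_bot pr_impI unfolding Neg_def by blast
  moreover have "Next (Or a b) \<in> G \<Longrightarrow> Next a \<in> G \<or> Next b \<in> G" for a b
    using assms ax_next_or pr_impI pr_or by blast
  ultimately show ?thesis unfolding pr_def fnext_def by auto
qed

lemma fnext_mono: "G \<subseteq> H \<Longrightarrow> fnext G \<subseteq> fnext H"
  unfolding fnext_def by auto

lemma prov_trans: "prov (Imp a b) \<Longrightarrow> prov (Imp b c) \<Longrightarrow> prov (Imp a c)"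
  by (rule prov_from_pr) (meson pr_impI)

lemma diam_unfold: "prov (Imp (Diam a) (Or a (Next (Diam a))))"
proof -
  let ?c = "Or a (Next (Diam a))"
  have a1: "prov (Imp a (Diam a))" using prov_trans[OF ax_disjI1 ax_diam_fix] .
  have a2: "prov (Imp (Next (Diam a)) (Diam a))" using prov_trans[OF ax_disjI2 ax_diam_fix] .
  have n1: "prov (Imp (Next a) (Next (Diam a)))" using ax_next_K nec[OF a1] prov.mp by blast
  have n2: "prov (Imp (Next (Next (Diam a))) (Next (Diam a)))" using ax_next_K nec[OF a2] prov.mp by blast
  have "prov (Imp (Next ?c) ?c)"
  proof (rule prov_from_pr)
    fix G assume G: "pr G" "Next ?c \<in> G"
    then have "Or (Next a) (Next (Next (Diam a))) \<in> G" using ax_next_or pr_impI by blast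
    then have "Next (Diam a) \<in> G" using G n1 n2 pr_impI pr_or by blast
    then show "?c \<in> G" using G pr_or by blast
  qed
  then have "prov (Imp (Diam ?c) ?c)" by (rule ind)
  moreover have "prov (Imp (Diam a) (Diam ?c))" by (rule diam_mono, rule ax_disjI1)
  ultimately show ?thesis using prov_trans by blast
qed

lemma pr_diam_unf: "pr G \<Longrightarrow> Diam a \<in> G \<longleftrightarrow> a \<in> G \<or> Diam a \<in> fnext G"
proof
  assume G: "pr G" "Diam a \<in> G"
  then have "Or a (Next (Diam a)) \<in> G" using diam_unfold pr_impI by blast
  then show "a \<in> G \<or> Diam a \<in> fnext G" using G pr_or unfolding fnext_def by blast
next
  assume G: "pr G" "a \<in> G \<or> Diam a \<in> fnext G"
  then have "Or a (Next (Diam a)) \<in> G" using pr_or unfolding fnext_def by blast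
  then show "Diam a \<in> G" using G ax_diam_fix pr_impI by blast
qed

lemma pr_diam_intro: "pr G \<Longrightarrow> a \<in> G \<Longrightarrow> Diam a \<in> G"
  using pr_diam_unf by blast

definition Tp :: fm where "Tp = Imp Bot Bot"

lemma pr_top: "pr G \<Longrightarrow> Tp \<in> G"
  unfolding Tp_def using pr_prov prov_refl by blast

definition cnj :: "fm list \<Rightarrow> fm" where "cnj xs = foldr And xs Tp"
definition dsj :: "fm list \<Rightarrow> fm" where "dsj xs = foldr Or xs Bot"

lemma pr_conj: "pr G \<Longrightarrow> cnj xs \<in> G \<longleftrightarrow> set xs \<subseteq> G"
  unfolding cnj_def by (induction xs) (auto simp: pr_and pr_top)

lemma pr_disj: "pr G \<Longrightarrow> dsj xs \<in> G \<longleftrightarrow> set xs \<inter> G \<noteq> {}"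
  unfolding dsj_def by (induction xs) (auto simp: pr_or pr_bot)

datatype mom = Mom (lab: "fm set") (kids: "mom list")

primrec desc :: "mom \<Rightarrow> mom set" where
  "desc (Mom t ks) = insert (Mom t ks) (\<Union> (set (map desc ks)))"

lemma desc_self[simp]: "w \<in> desc w"
  by (cases w) auto

lemma desc_kid: "c \<in> set (kids w) \<Longrightarrow> desc c \<subseteq> desc w"
  by (cases w) auto

lemma kid_desc: "c \<in> set (kids w) \<Longrightarrow> c \<in> desc w"
  using desc_kid[of c w] desc_self[of c] by blast

lemma desc_trans: "v \<in> desc w \<Longrightarrow> desc v \<subseteq> desc w"
  by (induction w) auto

lemma desc_cases: "v \<in> desc w \<Longrightarrow> v = w \<or> (\<exists>c\<in>set (kids w). v \<in> desc c)"
  by (cases w) auto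

lemma finite_desc: "finite (desc w)"
  by (induction w) auto

lemma desc_induct:
  assumes "v \<in> desc w" "P w" "\<And>a c. a \<in> desc w \<Longrightarrow> P a \<Longrightarrow> c \<in> set (kids a) \<Longrightarrow> P c"
  shows "P v"
  using assms
proof (induction w arbitrary: v)
  case (Mom t ks)
  show ?case
  proof (cases "v = Mom t ks")
    case True then show ?thesis using Mom by simp
  next
    case False
    then obtain c where c: "c \<in> set ks" "v \<in> desc c" using Mom.prems(1) by auto
    have "P c" using Mom.prems(3)[of "Mom t ks" c] Mom.prems(2) c by auto
    moreover have "\<And>a d. a \<in> desc c \<Longrightarrow> P a \<Longrightarrow> d \<in> set (kids a) \<Longrightarrow> P d"
      using Mom.prems(3) c(1) by auto
    ultimately show ?thesis using Mom.IH c by blast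
  qed
qed

locale ctx =
  fixes S :: "fm set" and sl :: "fm list"
  assumes sl: "set sl = S"
    and sub_and: "And a b \<in> S \<Longrightarrow> a \<in> S \<and> b \<in> S"
    and sub_or: "Or a b \<in> S \<Longrightarrow> a \<in> S \<and> b \<in> S"
    and sub_imp: "Imp a b \<in> S \<Longrightarrow> a \<in> S \<and> b \<in> S"
    and sub_next: "Next a \<in> S \<Longrightarrow> a \<in> S"
    and sub_diam: "Diam a \<in> S \<Longrightarrow> a \<in> S"
begin

lemma finS: "finite S" using sl by auto

definition compat :: "fm set \<Rightarrow> fm set \<Rightarrow> bool" where
  "compat t s \<longleftrightarrow> (\<forall>a. Next a \<in> S \<longrightarrow> (Next a \<in> t \<longleftrightarrow> a \<in> s)) \<and>
                  (\<forall>a. Diam a \<in> S \<longrightarrow> (Diam a \<in> t \<longleftrightarrow> a \<in> t \<or> Diam a \<in> s))"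

lemma compat_canon: "pr G \<Longrightarrow> compat (G \<inter> S) (fnext G \<inter> S)"
proof -
  assume G: "pr G"
  have "Next a \<in> G \<longleftrightarrow> a \<in> fnext G" for a by (simp add: fnext_def)
  moreover have "Diam a \<in> G \<longleftrightarrow> a \<in> G \<or> Diam a \<in> fnext G" for a using pr_diam_unf[OF G] .
  ultimately show ?thesis unfolding compat_def using sub_next sub_diam by blast
qed

fun Rm :: "mom \<Rightarrow> mom \<Rightarrow> bool" where
  "Rm (Mom t ks) w' \<longleftrightarrow> compat t (lab w') \<and> (\<forall>c\<in>set ks. \<exists>d\<in>desc w'. Rm c d)"

fun E :: "fm set \<Rightarrow> mom \<Rightarrow> bool" where
  "E G (Mom t ks) \<longleftrightarrow> pr G \<and> G \<inter> S = t \<and> (\<forall>c\<in>set ks. \<exists>G'. G \<subseteq> G' \<and> pr G' \<and> E G' c)"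

fun Pm :: "mom \<Rightarrow> fm set \<Rightarrow> bool" where
  "Pm (Mom t ks) L \<longleftrightarrow> pr L \<and> compat t (L \<inter> S) \<and> (\<forall>c\<in>set ks. \<exists>L'. L \<subseteq> L' \<and> pr L' \<and> Pm c L')"

end

context ctx
begin

definition wf :: "mom \<Rightarrow> bool" where
  "wf w \<longleftrightarrow> (\<forall>a\<in>desc w. lab a \<subseteq> S \<and> distinct (kids a) \<and> (\<forall>c\<in>set (kids a). lab a \<subset> lab c))"

definition impc :: "mom \<Rightarrow> bool" where
  "impc w \<longleftrightarrow> (\<forall>a\<in>desc w. \<forall>p q. Imp p q \<in> S \<longrightarrow> Imp p q \<notin> lab a \<longrightarrow> (\<exists>b\<in>desc a. p \<in> lab b \<and> q \<notin> lab b))"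

definition W :: "mom set" where
  "W = {w. wf w \<and> impc w \<and> (\<exists>G. E G w)}"

lemma wf_desc: "wf w \<Longrightarrow> v \<in> desc w \<Longrightarrow> wf v"
  unfolding wf_def using desc_trans by blast

lemma impc_desc: "impc w \<Longrightarrow> v \<in> desc w \<Longrightarrow> impc v"
  unfolding impc_def using desc_trans by blast

lemma E_pr: "E G w \<Longrightarrow> pr G"
  by (cases w) auto

lemma E_lab: "E G w \<Longrightarrow> lab w = G \<inter> S"
  by (cases w) auto

lemma E_desc: "E G w \<Longrightarrow> v \<in> desc w \<Longrightarrow> \<exists>G'. G \<subseteq> G' \<and> E G' v"
proof (induction w arbitrary: G v)
  case (Mom t ks)
  show ?case
  proof (cases "v = Mom t ks")
    case True then show ?thesis using Mom by blast
  next
    case False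
    then obtain c where c: "c \<in> set ks" "v \<in> desc c" using Mom.prems(2) by auto
    then obtain G' where G': "G \<subseteq> G'" "E G' c" using Mom.prems(1) by auto
    then obtain G'' where "G' \<subseteq> G''" "E G'' v" using Mom.IH c by blast
    then show ?thesis using G' by (intro exI[of _ G'']) auto
  qed
qed

lemma W_desc: "w \<in> W \<Longrightarrow> v \<in> desc w \<Longrightarrow> v \<in> W"
  unfolding W_def using wf_desc impc_desc E_desc by blast

lemma W_lab_mono: "w \<in> W \<Longrightarrow> v \<in> desc w \<Longrightarrow> lab w \<subseteq> lab v"
proof -
  assume "w \<in> W" "v \<in> desc w"
  then obtain G where G: "E G w" unfolding W_def by blast
  then obtain G' where "G \<subseteq> G'" "E G' v" using E_desc \<open>v \<in> desc w\<close> by blast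
  then show ?thesis using G E_lab by auto
qed

lemma W_type: "w \<in> W \<Longrightarrow> \<exists>G. pr G \<and> lab w = G \<inter> S"
  unfolding W_def using E_pr E_lab by blast

lemma Rm_compat: "Rm w w' \<Longrightarrow> compat (lab w) (lab w')"
  by (cases w) auto

lemma Rm_conf: "Rm w w' \<Longrightarrow> v \<in> desc w \<Longrightarrow> \<exists>v'\<in>desc w'. Rm v v'"
proof (induction w arbitrary: w' v)
  case (Mom t ks)
  show ?case
  proof (cases "v = Mom t ks")
    case True then show ?thesis using Mom by auto
  next
    case False
    then obtain c where c: "c \<in> set ks" "v \<in> desc c" using Mom.prems(2) by auto
    then obtain d where d: "d \<in> desc w'" "Rm c d" using Mom.prems(1) by auto
    then obtain v' where "v' \<in> desc d" "Rm v v'" using Mom.IH c by blast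
    then show ?thesis using d desc_trans by blast
  qed
qed

lemma E_Pm: "E G w \<Longrightarrow> Pm w (fnext G)"
proof (induction w arbitrary: G)
  case (Mom t ks)
  have G: "pr G" "G \<inter> S = t" using Mom.prems by auto
  have "compat t (fnext G \<inter> S)" using compat_canon G by blast
  moreover have "\<exists>L'. fnext G \<subseteq> L' \<and> pr L' \<and> Pm c L'" if c: "c \<in> set ks" for c
  proof -
    obtain G' where G': "G \<subseteq> G'" "pr G'" "E G' c" using Mom.prems c by auto
    then have "Pm c (fnext G')" using Mom.IH c by blast
    moreover have "fnext G \<subseteq> fnext G'" using fnext_mono G' by blast
    ultimately show ?thesis using pr_fnext G' by blast
  qed
  ultimately show ?case using pr_fnext G by simp
qed

lemma Pm_same: "Pm u L' \<Longrightarrow> L \<subseteq> L' \<Longrightarrow> pr L \<Longrightarrow> L \<inter> S = L' \<inter> S \<Longrightarrow> Pm u L"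
proof (cases u)
  case (Mom t ks)
  assume a: "Pm u L'" "L \<subseteq> L'" "pr L" "L \<inter> S = L' \<inter> S"
  have "\<exists>L''. L \<subseteq> L'' \<and> pr L'' \<and> Pm c L''" if c: "c \<in> set ks" for c
  proof -
    obtain L'' where "L' \<subseteq> L''" "pr L''" "Pm c L''" using a Mom c by auto
    then show ?thesis using a(2) by (intro exI[of _ L'']) auto
  qed
  then show ?thesis using a Mom by auto
qed

lemma card_less: "L \<subseteq> L' \<Longrightarrow> L' \<inter> S \<noteq> L \<inter> S \<Longrightarrow> card (S - L' \<inter> S) < card (S - L \<inter> S)"
  using finS by (intro psubset_card_mono) auto

lemma finite_imps: "finite {(p, q). Imp p q \<in> S}"
proof -
  have "{(p, q). Imp p q \<in> S} \<subseteq> (\<lambda>x. case x of Imp p q \<Rightarrow> (p, q) | _ \<Rightarrow> (Bot, Bot)) ` S"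
    by (auto intro!: image_eqI)
  then show ?thesis using finS finite_subset by blast
qed

lemma build_aux:
  "\<forall>L U. card (S - L \<inter> S) = n \<longrightarrow> pr L \<longrightarrow> finite U \<longrightarrow> (\<forall>u\<in>U. Pm u L) \<longrightarrow>
     (\<exists>w. wf w \<and> impc w \<and> E L w \<and> (\<forall>u\<in>U. Rm u w))"
proof (induction n rule: less_induct)
  case (less n)
  show ?case
  proof (intro allI impI)
    fix L U
    assume n: "card (S - L \<inter> S) = n" and L: "pr L" and U: "finite U" and PU: "\<forall>u\<in>U. Pm u L"
    define D where "D = \<Union> (desc ` U)"
    have finD: "finite D" unfolding D_def using U finite_desc by blast
    define Q where "Q = {c \<in> D. \<exists>L'. L \<subseteq> L' \<and> pr L' \<and> Pm c L' \<and> L' \<inter> S \<noteq> L \<inter> S}"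
    have "\<exists>w. wf w \<and> impc w \<and> (\<exists>L'. L \<subseteq> L' \<and> pr L' \<and> L' \<inter> S \<noteq> L \<inter> S \<and> E L' w) \<and> Rm c w"
      if "c \<in> Q" for c
    proof -
      have "\<exists>L'. L \<subseteq> L' \<and> pr L' \<and> Pm c L' \<and> L' \<inter> S \<noteq> L \<inter> S" using that Q_def by simp
      then obtain L' where L': "L \<subseteq> L'" "pr L'" "Pm c L'" "L' \<inter> S \<noteq> L \<inter> S" by blast
      have "card (S - L' \<inter> S) < n" using card_less L' n by blast
      then obtain w where "wf w \<and> impc w \<and> E L' w \<and> (\<forall>u\<in>{c}. Rm u w)"
        using less.IH L' by (metis finite.emptyI finite_insert singletonD)
      then show ?thesis using L' by blast
    qed
    then obtain g where g: "\<And>c. c \<in> Q \<Longrightarrow> wf (g c) \<and> impc (g c) \<and>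
        (\<exists>L'. L \<subseteq> L' \<and> pr L' \<and> L' \<inter> S \<noteq> L \<inter> S \<and> E L' (g c)) \<and> Rm c (g c)"
      by metis
    define I where "I = {(p, q). Imp p q \<in> S \<and> Imp p q \<notin> L \<and> p \<notin> L}"
    have finI: "finite I" unfolding I_def by (rule finite_subset[OF _ finite_imps]) auto
    have "\<exists>w. wf w \<and> impc w \<and> (\<exists>L'. L \<subseteq> L' \<and> pr L' \<and> L' \<inter> S \<noteq> L \<inter> S \<and> E L' w) \<and>
        fst i \<in> lab w \<and> snd i \<notin> lab w" if iI: "i \<in> I" for i
    proof -
      obtain p q where i: "i = (p, q)" "Imp p q \<in> S" "Imp p q \<notin> L" "p \<notin> L" using iI unfolding I_def by blast
      have "\<exists>D. L \<subseteq> D \<and> pr D \<and> p \<in> D \<and> q \<notin> D" using canon_imp[OF L, of p q] i(3) by simp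
      then obtain L' where L': "L \<subseteq> L'" "pr L'" "p \<in> L'" "q \<notin> L'" by blast
      have pq: "p \<in> S" "q \<in> S" using sub_imp[OF i(2)] by auto
      have "p \<in> L' \<inter> S" "p \<notin> L \<inter> S" using pq L' i(4) by auto
      then have neq: "L' \<inter> S \<noteq> L \<inter> S" by metis
      then have "card (S - L' \<inter> S) < n" using card_less L' n by blast
      then obtain w where w: "wf w" "impc w" "E L' w"
        using less.IH L' by (metis empty_iff finite.emptyI)
      have lw: "lab w = L' \<inter> S" using E_lab w by blast
      have "fst i \<in> lab w \<and> snd i \<notin> lab w" using lw L' i(1) pq by auto
      then show ?thesis using w L' neq by blast
    qed
    then obtain h where h: "\<And>i. i \<in> I \<Longrightarrow> wf (h i) \<and> impc (h i) \<and>
        (\<exists>L'. L \<subseteq> L' \<and> pr L' \<and> L' \<inter> S \<noteq> L \<inter> S \<and> E L' (h i)) \<and> fst i \<in> lab (h i) \<and> snd i \<notin> lab (h i)"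
      by metis
    define K where "K = g ` Q \<union> h ` I"
    have finK: "finite K" unfolding K_def Q_def using finD finI by auto
    have Kp: "wf k \<and> impc k \<and> (\<exists>L'. L \<subseteq> L' \<and> pr L' \<and> L' \<inter> S \<noteq> L \<inter> S \<and> E L' k)" if "k \<in> K" for k
      using that g h unfolding K_def by blast
    obtain ks where ks: "set ks = K" "distinct ks" using finite_distinct_list[OF finK] by blast
    define w where "w = Mom (L \<inter> S) ks"
    have labK: "L \<inter> S \<subset> lab k" if kK: "k \<in> K" for k
    proof -
      obtain L' where "L \<subseteq> L'" "L' \<inter> S \<noteq> L \<inter> S" "E L' k" using Kp kK by blast
      then show ?thesis using E_lab by blast
    qed
    have "wf w"
      unfolding wf_def
    proof
      fix a assume "a \<in> desc w"
      then have "a = w \<or> (\<exists>k\<in>K. a \<in> desc k)" unfolding w_def using ks by auto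
      then show "lab a \<subseteq> S \<and> distinct (kids a) \<and> (\<forall>c\<in>set (kids a). lab a \<subset> lab c)"
      proof
        assume "a = w" then show ?thesis unfolding w_def using ks labK by auto
      next
        assume "\<exists>k\<in>K. a \<in> desc k"
        then show ?thesis using Kp unfolding wf_def by blast
      qed
    qed
    moreover have "impc w"
      unfolding impc_def
    proof
      fix a assume "a \<in> desc w"
      then have "a = w \<or> (\<exists>k\<in>K. a \<in> desc k)" unfolding w_def using ks by auto
      then show "\<forall>p q. Imp p q \<in> S \<longrightarrow> Imp p q \<notin> lab a \<longrightarrow> (\<exists>b\<in>desc a. p \<in> lab b \<and> q \<notin> lab b)"
      proof
        assume aw: "a = w"
        show ?thesis
        proof (intro allI impI)
          fix p q assume pq: "Imp p q \<in> S" "Imp p q \<notin> lab a"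
          then have nL: "Imp p q \<notin> L" using aw unfolding w_def by auto
          have pqS: "p \<in> S" "q \<in> S" using sub_imp[OF pq(1)] by auto
          show "\<exists>b\<in>desc a. p \<in> lab b \<and> q \<notin> lab b"
          proof (cases "p \<in> L")
            case True
            then have "q \<notin> L" using nL pr_imp_weak L by blast
            then show ?thesis using True aw pqS unfolding w_def by (intro bexI[of _ w]) (auto simp: w_def)
          next
            case False
            then have "(p, q) \<in> I" using pq nL unfolding I_def by blast
            then have "h (p, q) \<in> K" "p \<in> lab (h (p, q))" "q \<notin> lab (h (p, q))" using h unfolding K_def by force+
            moreover have "h (p, q) \<in> set (kids a)" using calculation(1) ks aw unfolding w_def by auto
            then have "h (p, q) \<in> desc a" using desc_kid[of "h (p, q)" a] desc_self[of "h (p, q)"] by blast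
            ultimately show ?thesis by blast
          qed
        qed
      next
        assume "\<exists>k\<in>K. a \<in> desc k"
        then show ?thesis using Kp unfolding impc_def by blast
      qed
    qed
    moreover have "E L w"
      unfolding w_def using L ks Kp by auto
    moreover have "\<forall>u. Pm u L \<longrightarrow> u \<in> D \<longrightarrow> Rm u w"
    proof
      fix u show "Pm u L \<longrightarrow> u \<in> D \<longrightarrow> Rm u w"
      proof (induction u)
        case (Mom t cs)
        show ?case
        proof (intro impI)
          assume P: "Pm (Mom t cs) L" and uD: "Mom t cs \<in> D"
          have "compat t (lab w)" using P unfolding w_def by simp
          moreover have "\<exists>d\<in>desc w. Rm c d" if c: "c \<in> set cs" for c
          proof -
            obtain Lc where Lc: "L \<subseteq> Lc" "pr Lc" "Pm c Lc" using P c by auto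
            obtain u0 where u0: "u0 \<in> U" "Mom t cs \<in> desc u0" using uD unfolding D_def by blast
            have "c \<in> desc (Mom t cs)" unfolding desc.simps set_map using c desc_self[of c] by blast
            then have "c \<in> desc u0" using desc_trans[OF u0(2)] by blast
            then have cD: "c \<in> D" using u0(1) unfolding D_def by blast
            show ?thesis
            proof (cases "Lc \<inter> S = L \<inter> S")
              case True
              then have "Pm c L" using Pm_same Lc L by metis
              then have "Rm c w" using Mom.IH c cD by blast
              then show ?thesis by (intro bexI[of _ w]) auto
            next
              case False
              then have "c \<in> Q" unfolding Q_def using cD Lc by blast
              then have "Rm c (g c)" "g c \<in> set ks" using g ks unfolding K_def by auto
              then show ?thesis unfolding w_def by auto
            qed
          qed
          ultimately show "Rm (Mom t cs) w" by simp
        qed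
      qed
    qed
    then have "\<forall>u\<in>U. Rm u w" using PU desc_self unfolding D_def by blast
    ultimately show "\<exists>w. wf w \<and> impc w \<and> E L w \<and> (\<forall>u\<in>U. Rm u w)" by blast
  qed
qed

lemma build:
  "pr L \<Longrightarrow> finite U \<Longrightarrow> (\<forall>u\<in>U. Pm u L) \<Longrightarrow> \<exists>w. wf w \<and> impc w \<and> E L w \<and> (\<forall>u\<in>U. Rm u w)"
  using build_aux by blast

lemma init_mom: "pr L \<Longrightarrow> \<exists>w\<in>W. lab w = L \<inter> S"
  using build[of L "{}"] E_lab unfolding W_def by blast

lemma succ_mom: "E G w \<Longrightarrow> \<exists>w'. wf w' \<and> impc w' \<and> E (fnext G) w' \<and> Rm w w'"
  using build[of "fnext G" "{w}"] E_Pm E_pr pr_fnext by blast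

lemma serial: "w \<in> W \<Longrightarrow> \<exists>w'\<in>W. Rm w w'"
  using succ_mom unfolding W_def by blast

end

context ctx
begin

lemma finite_wf_lab: "\<forall>t. card (S - t) = n \<longrightarrow> finite {w. wf w \<and> lab w = t}"
proof (induction n rule: less_induct)
  case (less n)
  show ?case
  proof (intro allI impI)
    fix t assume n: "card (S - t) = n"
    show "finite {w. wf w \<and> lab w = t}"
    proof (cases "t \<subseteq> S")
      case False
      then have "{w. wf w \<and> lab w = t} = {}" unfolding wf_def using desc_self by blast
      then show ?thesis by (metis finite.emptyI)
    next
      case True
      define A where "A = (\<Union>t'\<in>{t'. t' \<subseteq> S \<and> t \<subset> t'}. {w. wf w \<and> lab w = t'})"
      have "finite {w. wf w \<and> lab w = t'}" if "t' \<subseteq> S" "t \<subset> t'" for t'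
      proof -
        have "card (S - t') < card (S - t)" using that finS by (intro psubset_card_mono) auto
        then have "card (S - t') < n" using n by simp
        then show ?thesis using less.IH by blast
      qed
      then have finA: "finite A" unfolding A_def using finS by (intro finite_UN_I) auto
      have "{w. wf w \<and> lab w = t} \<subseteq> (\<lambda>ks. Mom t ks) ` {ks. set ks \<subseteq> A \<and> length ks \<le> card A}"
      proof
        fix w assume w: "w \<in> {w. wf w \<and> lab w = t}"
        obtain ks where wk: "w = Mom t ks" using w by (cases w) auto
        have d: "distinct ks" "\<forall>c\<in>set ks. t \<subset> lab c \<and> lab c \<subseteq> S \<and> wf c"
        proof -
          have ww: "w \<in> desc w" by simp
          have wfw: "wf w" using w by simp
          have A: "lab w \<subseteq> S \<and> distinct (kids w) \<and> (\<forall>c\<in>set (kids w). lab w \<subset> lab c)"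
            using wfw ww unfolding wf_def by blast
          have kw: "kids w = ks" "lab w = t" using wk by auto
          show "distinct ks" using A kw by simp
          show "\<forall>c\<in>set ks. t \<subset> lab c \<and> lab c \<subseteq> S \<and> wf c"
          proof
            fix c assume c: "c \<in> set ks"
            then have cd: "c \<in> desc w" using wk kid_desc[of c w] by simp
            have "wf c" using wf_desc w cd by blast
            moreover have "t \<subset> lab c" using A kw c by simp
            moreover have "lab c \<subseteq> S" using calculation(1) desc_self[of c] unfolding wf_def by blast
            ultimately show "t \<subset> lab c \<and> lab c \<subseteq> S \<and> wf c" by blast
          qed
        qed
        then have "set ks \<subseteq> A" unfolding A_def by blast
        moreover have "length ks \<le> card A" using d(1) calculation finA by (metis card_mono distinct_card)
        ultimately show "w \<in> (\<lambda>ks. Mom t ks) ` {ks. set ks \<subseteq> A \<and> length ks \<le> card A}" using wk by blast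
      qed
      moreover have "finite ((\<lambda>ks. Mom t ks) ` {ks. set ks \<subseteq> A \<and> length ks \<le> card A})"
        using finite_lists_length_le[OF finA] by blast
      ultimately show ?thesis using finite_subset by blast
    qed
  qed
qed

lemma finite_W: "finite W"
proof -
  have "W \<subseteq> (\<Union>t\<in>Pow S. {w. wf w \<and> lab w = t})"
    unfolding W_def wf_def using desc_self by blast
  moreover have "finite (\<Union>t\<in>Pow S. {w. wf w \<and> lab w = t})"
    using finite_wf_lab finS by blast
  ultimately show ?thesis using finite_subset by blast
qed

primrec eps :: "mom \<Rightarrow> fm" where
  "eps (Mom t ks) = Imp (cnj (filter (\<lambda>x. x \<in> t) sl)) (Or (dsj (filter (\<lambda>x. x \<notin> t) sl)) (dsj (map eps ks)))"

lemma eps_char: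
  "pr G \<Longrightarrow> (\<forall>a\<in>desc w. lab a \<subseteq> S) \<Longrightarrow> (eps w \<notin> G \<longleftrightarrow> (\<exists>G'. G \<subseteq> G' \<and> E G' w))"
proof (induction w arbitrary: G)
  case (Mom t ks)
  have tS: "t \<subseteq> S" using Mom.prems(2) desc_self[of "Mom t ks"] by auto
  have kS: "\<forall>a\<in>desc c. lab a \<subseteq> S" if "c \<in> set ks" for c
    using Mom.prems(2) that desc_kid[of c "Mom t ks"] by auto
  have "eps (Mom t ks) \<notin> G \<longleftrightarrow> (\<exists>D. G \<subseteq> D \<and> pr D \<and> cnj (filter (\<lambda>x. x \<in> t) sl) \<in> D \<and>
      Or (dsj (filter (\<lambda>x. x \<notin> t) sl)) (dsj (map eps ks)) \<notin> D)"
    using canon_imp[OF Mom.prems(1)] by simp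
  also have "\<dots> \<longleftrightarrow> (\<exists>D. G \<subseteq> D \<and> pr D \<and> D \<inter> S = t \<and> (\<forall>c\<in>set ks. eps c \<notin> D))"
  proof -
    have "cnj (filter (\<lambda>x. x \<in> t) sl) \<in> D \<and> Or (dsj (filter (\<lambda>x. x \<notin> t) sl)) (dsj (map eps ks)) \<notin> D
      \<longleftrightarrow> D \<inter> S = t \<and> (\<forall>c\<in>set ks. eps c \<notin> D)" if D: "pr D" for D
    proof -
      have "cnj (filter (\<lambda>x. x \<in> t) sl) \<in> D \<longleftrightarrow> t \<subseteq> D"
        using pr_conj[OF D] tS sl by auto
      moreover have "dsj (filter (\<lambda>x. x \<notin> t) sl) \<notin> D \<longleftrightarrow> (S - t) \<inter> D = {}"
        using pr_disj[OF D] sl by auto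
      moreover have "dsj (map eps ks) \<notin> D \<longleftrightarrow> (\<forall>c\<in>set ks. eps c \<notin> D)"
        using pr_disj[OF D] by auto
      ultimately show ?thesis using pr_or[OF D] tS by blast
    qed
    then show ?thesis by blast
  qed
  also have "\<dots> \<longleftrightarrow> (\<exists>D. G \<subseteq> D \<and> E D (Mom t ks))"
  proof -
    have "(\<forall>c\<in>set ks. eps c \<notin> D) \<longleftrightarrow> (\<forall>c\<in>set ks. \<exists>G'. D \<subseteq> G' \<and> pr G' \<and> E G' c)" if D: "pr D" for D
    proof -
      have "eps c \<notin> D \<longleftrightarrow> (\<exists>G'. D \<subseteq> G' \<and> pr G' \<and> E G' c)" if c: "c \<in> set ks" for c
        using Mom.IH[OF c D kS[OF c]] E_pr by blast
      then show ?thesis by blast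
    qed
    then show ?thesis by auto
  qed
  finally show ?case .
qed

inductive good :: "fm \<Rightarrow> mom \<Rightarrow> bool" for th where
  g0: "w \<in> W \<Longrightarrow> th \<in> lab w \<Longrightarrow> good th w"
| g1: "w \<in> W \<Longrightarrow> w' \<in> W \<Longrightarrow> Rm w w' \<Longrightarrow> good th w' \<Longrightarrow> good th w"

lemma W_labS: "w \<in> W \<Longrightarrow> \<forall>a\<in>desc w. lab a \<subseteq> S"
  unfolding W_def wf_def by blast

lemma realize:
  assumes w: "w \<in> W" and d: "Diam th \<in> lab w"
  shows "good th w"
proof -
  define B where "B = W \<inter> {w. \<not> good th w}"
  have "finite B" unfolding B_def using finite_W by blast
  then obtain bl where bl: "set bl = B" using finite_list by blast
  define chi where "chi = cnj (map eps bl)"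
  have key: "chi \<in> G \<longleftrightarrow> (\<forall>b\<in>B. \<not> (\<exists>G'. G \<subseteq> G' \<and> E G' b))" if G: "pr G" for G
  proof -
    have "chi \<in> G \<longleftrightarrow> (\<forall>b\<in>B. eps b \<in> G)" unfolding chi_def using pr_conj[OF G] bl by auto
    also have "\<dots> \<longleftrightarrow> (\<forall>b\<in>B. \<not> (\<exists>G'. G \<subseteq> G' \<and> E G' b))"
    proof -
      have "eps b \<in> G \<longleftrightarrow> \<not> (\<exists>G'. G \<subseteq> G' \<and> E G' b)" if b: "b \<in> B" for b
      proof -
        have "b \<in> W" using b unfolding B_def by blast
        then show ?thesis using eps_char[OF G W_labS] by blast
      qed
      then show ?thesis by blast
    qed
    finally show ?thesis .
  qed
  have thS: "th \<in> S" using d W_labS[OF w] desc_self[of w] sub_diam by blast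
  have h1: "prov (Imp th chi)"
  proof (rule prov_from_pr)
    fix G assume G: "pr G" "th \<in> G"
    have "\<not> (\<exists>G'. G \<subseteq> G' \<and> E G' b)" if b: "b \<in> B" for b
    proof
      assume "\<exists>G'. G \<subseteq> G' \<and> E G' b"
      then obtain G' where "G \<subseteq> G'" "E G' b" by blast
      then have "th \<in> lab b" using E_lab G thS by auto
      then have "good th b" using g0 b unfolding B_def by blast
      then show False using b unfolding B_def by blast
    qed
    then show "chi \<in> G" using key G by blast
  qed
  have h2: "prov (Imp (Next chi) chi)"
  proof (rule prov_from_pr)
    fix G assume G: "pr G" "Next chi \<in> G"
    then have cf: "chi \<in> fnext G" unfolding fnext_def by simp
    have "\<not> (\<exists>G'. G \<subseteq> G' \<and> E G' b)" if b: "b \<in> B" for b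
    proof
      assume "\<exists>G'. G \<subseteq> G' \<and> E G' b"
      then obtain G' where G': "G \<subseteq> G'" "E G' b" by blast
      then obtain w' where w': "wf w'" "impc w'" "E (fnext G') w'" "Rm b w'" using succ_mom by blast
      then have w'W: "w' \<in> W" unfolding W_def by blast
      have "fnext G \<subseteq> fnext G'" using fnext_mono G' by blast
      then have "good th w'"
        using key[OF pr_fnext[OF G(1)]] cf w' w'W unfolding B_def by blast
      then have "good th b" using g1 b w'W w' unfolding B_def by blast
      then show False using b unfolding B_def by blast
    qed
    then show "chi \<in> G" using key G by blast
  qed
  have h3: "prov (Imp (Diam chi) chi)" using ind[OF h2] .
  have h4: "prov (Imp (Diam th) (Diam chi))" using diam_mono[OF h1] .
  obtain G where G: "E G w" using w unfolding W_def by blast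
  then have pG: "pr G" using E_pr by blast
  have "Diam th \<in> G" using d E_lab G by blast
  then have "chi \<in> G" using h3 h4 pG pr_impI by blast
  show ?thesis
  proof (rule ccontr)
    assume "\<not> good th w"
    then have "w \<in> B" using w unfolding B_def by blast
    then show False using key[OF pG] \<open>chi \<in> G\<close> G by blast
  qed
qed

lemma good_path: "good th w \<Longrightarrow> \<exists>p. p \<noteq> [] \<and> hd p = w \<and> successively Rm p \<and> set p \<subseteq> W \<and> th \<in> lab (last p)"
proof (induction rule: good.induct)
  case (g0 w)
  then show ?case by (intro exI[of _ "[w]"]) auto
next
  case (g1 w w')
  then obtain p where p: "p \<noteq> []" "hd p = w'" "successively Rm p" "set p \<subseteq> W" "th \<in> lab (last p)" by blast
  then have "successively Rm (w # p)" using g1 by (cases p) auto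
  then show ?case using p g1 by (intro exI[of _ "w # p"]) auto
qed

lemma persist_list:
  "successively Rm p \<Longrightarrow> p \<noteq> [] \<Longrightarrow> set p \<subseteq> W \<Longrightarrow> Diam th \<in> lab (hd p) \<Longrightarrow>
    (\<exists>v\<in>set p. th \<in> lab v) \<or> Diam th \<in> lab (last p)"
proof (induction p rule: induct_list012)
  case 1 then show ?case by simp
next
  case (2 x) then show ?case by simp
next
  case (3 x y zs)
  have xW: "x \<in> W" using 3 by auto
  have "Diam th \<in> lab x" using 3(6) by simp
  then have "Diam th \<in> S" using W_labS[OF xW] desc_self[of x] by blast
  then have "th \<in> lab x \<or> Diam th \<in> lab y"
    using 3(6) Rm_compat[of x y] 3(3) unfolding compat_def by auto
  then show ?case
  proof
    assume "th \<in> lab x" then show ?thesis by auto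
  next
    assume "Diam th \<in> lab y"
    then have "(\<exists>v\<in>set (y # zs). th \<in> lab v) \<or> Diam th \<in> lab (last (y # zs))"
      using 3 by auto
    then show ?thesis by auto
  qed
qed

lemma block_aux:
  "\<forall>w\<in>W. \<exists>p. 2 \<le> length p \<and> hd p = w \<and> successively Rm p \<and> set p \<subseteq> W \<and>
     (\<forall>th\<in>set L. Diam th \<in> lab w \<longrightarrow> (\<exists>v\<in>set p. th \<in> lab v))"
proof (induction L)
  case Nil
  show ?case
  proof
    fix w assume w: "w \<in> W"
    then obtain w' where "w' \<in> W" "Rm w w'" using serial by blast
    then show "\<exists>p. 2 \<le> length p \<and> hd p = w \<and> successively Rm p \<and> set p \<subseteq> W \<and>
     (\<forall>th\<in>set []. Diam th \<in> lab w \<longrightarrow> (\<exists>v\<in>set p. th \<in> lab v))"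
      using w by (intro exI[of _ "[w, w']"]) auto
  qed
next
  case (Cons th L)
  show ?case
  proof
    fix w assume w: "w \<in> W"
    then obtain p where p: "2 \<le> length p" "hd p = w" "successively Rm p" "set p \<subseteq> W"
      "\<forall>th\<in>set L. Diam th \<in> lab w \<longrightarrow> (\<exists>v\<in>set p. th \<in> lab v)" using Cons by blast
    show "\<exists>p. 2 \<le> length p \<and> hd p = w \<and> successively Rm p \<and> set p \<subseteq> W \<and>
     (\<forall>th\<in>set (th # L). Diam th \<in> lab w \<longrightarrow> (\<exists>v\<in>set p. th \<in> lab v))"
    proof (cases "Diam th \<in> lab w \<and> \<not> (\<exists>v\<in>set p. th \<in> lab v)")
      case False
      then show ?thesis using p by (intro exI[of _ p]) auto
    next
      case True
      have pne: "p \<noteq> []" using p(1) by auto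
      have "Diam th \<in> lab (last p)" using persist_list[OF p(3) pne p(4)] True p(2) by blast
      moreover have lW: "last p \<in> W" using p(4) pne by auto
      ultimately have "good th (last p)" using realize by blast
      then obtain q where q: "q \<noteq> []" "hd q = last p" "successively Rm q" "set q \<subseteq> W" "th \<in> lab (last q)"
        using good_path by blast
      obtain q' where q': "q = last p # q'" using q by (cases q) auto
      have s: "successively Rm (p @ q')"
      proof (cases q')
        case Nil then show ?thesis using p by simp
      next
        case (Cons a r)
        then have "Rm (last p) a" "successively Rm q'" using q(3) q' by auto
        then show ?thesis using p(3) pne Cons by (simp add: successively_append_iff)
      qed
      have "\<exists>v\<in>set (p @ q'). th \<in> lab v"
      proof (cases q')
        case Nil then show ?thesis using q q' pne by auto
      next
        case (Cons a r)
        then have "last q = last q'" "last q' \<in> set q'" using q' by auto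
        then show ?thesis using q(5) by auto
      qed
      moreover have "hd (p @ q') = w" using p pne by simp
      moreover have "set (p @ q') \<subseteq> W" using p q q' by auto
      moreover have "2 \<le> length (p @ q')" using p by simp
      ultimately show ?thesis using s p(5) by (intro exI[of _ "p @ q'"]) auto
    qed
  qed
qed

lemma block: "w \<in> W \<Longrightarrow> \<exists>p. 2 \<le> length p \<and> hd p = w \<and> successively Rm p \<and> set p \<subseteq> W \<and>
     (\<forall>th. Diam th \<in> lab w \<longrightarrow> (\<exists>v\<in>set p. th \<in> lab v))"
proof -
  assume w: "w \<in> W"
  obtain p where p: "2 \<le> length p" "hd p = w" "successively Rm p" "set p \<subseteq> W"
      "\<forall>th\<in>set sl. Diam th \<in> lab w \<longrightarrow> (\<exists>v\<in>set p. th \<in> lab v)" using block_aux w by blast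
  have "Diam th \<in> lab w \<Longrightarrow> th \<in> set sl" for th using W_labS[OF w] desc_self[of w] sub_diam sl by blast
  then show ?thesis using p by blast
qed

end

context ctx
begin

definition blk :: "mom \<Rightarrow> mom list" where
  "blk w = (SOME p. 2 \<le> length p \<and> hd p = w \<and> successively Rm p \<and> set p \<subseteq> W \<and>
     (\<forall>th. Diam th \<in> lab w \<longrightarrow> (\<exists>v\<in>set p. th \<in> lab v)))"

lemma blk: "w \<in> W \<Longrightarrow> 2 \<le> length (blk w) \<and> hd (blk w) = w \<and> successively Rm (blk w) \<and> set (blk w) \<subseteq> W \<and>
     (\<forall>th. Diam th \<in> lab w \<longrightarrow> (\<exists>v\<in>set (blk w). th \<in> lab v))"
  unfolding blk_def using someI_ex[OF block] by blast

primrec st :: "mom \<Rightarrow> nat \<Rightarrow> mom list" where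
  "st w 0 = blk w"
| "st w (Suc n) = (if 2 < length (st w n) then tl (st w n) else blk (last (st w n)))"

lemma st_inv: "w \<in> W \<Longrightarrow> 2 \<le> length (st w n) \<and> successively Rm (st w n) \<and> set (st w n) \<subseteq> W"
proof (induction n)
  case 0 then show ?case using blk by simp
next
  case (Suc n)
  let ?s = "st w n"
  show ?case
  proof (cases "2 < length ?s")
    case True
    obtain a r where ar: "?s = a # r" using True by (cases ?s) auto
    have s: "successively Rm ?s" using Suc by blast
    have "successively Rm r" using s unfolding ar successively_Cons by auto
    then show ?thesis using True Suc ar by auto
  next
    case False
    have "?s \<noteq> []" using Suc by auto
    then have "last ?s \<in> W" using Suc by auto
    then show ?thesis using False blk by simp
  qed
qed

lemma st_drop: "w \<in> W \<Longrightarrow> k + 2 \<le> length (st w n) \<Longrightarrow> st w (n + k) = drop k (st w n)"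
proof (induction k)
  case 0 then show ?case by simp
next
  case (Suc k)
  then have "st w (n + k) = drop k (st w n)" by simp
  moreover have "2 < length (drop k (st w n))" using Suc.prems by simp
  ultimately show ?case by (simp add: drop_Suc tl_drop)
qed

lemma st_end: "w \<in> W \<Longrightarrow> st w (n + (length (st w n) - 1)) = blk (last (st w n))"
proof -
  assume w: "w \<in> W"
  let ?s = "st w n" let ?m = "length ?s"
  have m: "2 \<le> ?m" using st_inv w by blast
  have d: "st w (n + (?m - 2)) = drop (?m - 2) ?s" using st_drop[OF w, of "?m - 2" n] m by simp
  have l: "length (drop (?m - 2) ?s) = 2" using m by simp
  have "n + (?m - 1) = Suc (n + (?m - 2))" using m by simp
  then have "st w (n + (?m - 1)) = blk (last (drop (?m - 2) ?s))" using d l by simp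
  also have "last (drop (?m - 2) ?s) = last ?s" using m by (simp add: last_drop)
  finally show ?thesis .
qed

lemma st_hd: "w \<in> W \<Longrightarrow> k < length (st w n) \<Longrightarrow> hd (st w (n + k)) = st w n ! k"
proof -
  assume w: "w \<in> W" and k: "k < length (st w n)"
  let ?s = "st w n" let ?m = "length ?s"
  have m: "2 \<le> ?m" using st_inv w by blast
  show ?thesis
  proof (cases "k + 2 \<le> ?m")
    case True
    then show ?thesis using st_drop[OF w True] by (simp add: hd_drop_conv_nth)
  next
    case False
    then have kk: "k = ?m - 1" using k by simp
    have "last ?s \<in> W" using st_inv[OF w, of n] m by (metis last_in_set list.size(3) not_numeral_le_zero subsetD)
    then have "hd (st w (n + k)) = last ?s" using st_end[OF w, of n] kk blk by simp
    also have "\<dots> = ?s ! k"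
    proof -
      have ne: "?s \<noteq> []" using m by auto
      show ?thesis using kk by (simp add: last_conv_nth[OF ne])
    qed
    finally show ?thesis .
  qed
qed

definition pth :: "mom \<Rightarrow> nat \<Rightarrow> mom" where
  "pth w n = hd (st w n)"

lemma path_W: "w \<in> W \<Longrightarrow> pth w n \<in> W"
  unfolding pth_def using st_inv by (metis hd_in_set list.size(3) not_numeral_le_zero subsetD)

lemma path_R: "w \<in> W \<Longrightarrow> Rm (pth w n) (pth w (Suc n))"
proof -
  assume w: "w \<in> W"
  let ?s = "st w n"
  have i: "2 \<le> length ?s" "successively Rm ?s" using st_inv w by blast+
  have "hd (st w (n + 1)) = ?s ! 1" using st_hd[OF w, of 1 n] i by simp
  moreover have "hd ?s = ?s ! 0"
  proof -
    have ne: "?s \<noteq> []" using i by auto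
    show ?thesis by (simp add: hd_conv_nth[OF ne])
  qed
  moreover have "Rm (?s ! 0) (?s ! 1)" using successively_nth[OF i(2), of 0] i by simp
  ultimately show ?thesis unfolding pth_def by simp
qed

lemma path_0: "w \<in> W \<Longrightarrow> pth w 0 = w"
  unfolding pth_def using blk by simp

lemma persist_seq:
  assumes "\<And>k. x k \<in> W" "\<And>k. Rm (x k) (x (Suc k))" "Diam th \<in> lab (x i)"
  shows "(\<exists>j. i \<le> j \<and> j \<le> i + d \<and> th \<in> lab (x j)) \<or> Diam th \<in> lab (x (i + d))"
proof (induction d)
  case 0 then show ?case using assms by simp
next
  case (Suc d)
  then show ?case
  proof
    assume "\<exists>j. i \<le> j \<and> j \<le> i + d \<and> th \<in> lab (x j)"
    then obtain j where "i \<le> j" "j \<le> i + d" "th \<in> lab (x j)" by blast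
    then show ?thesis by (intro disjI1 exI[of _ j]) auto
  next
    assume a: "Diam th \<in> lab (x (i + d))"
    have "Diam th \<in> S" using a W_labS[OF assms(1)] desc_self by blast
    then have "th \<in> lab (x (i + d)) \<or> Diam th \<in> lab (x (Suc (i + d)))"
      using a Rm_compat[OF assms(2)] unfolding compat_def by blast
    then show ?thesis
    proof
      assume "th \<in> lab (x (i + d))"
      then show ?thesis by (intro disjI1 exI[of _ "i + d"]) auto
    next
      assume "Diam th \<in> lab (x (Suc (i + d)))"
      then show ?thesis by simp
    qed
  qed
qed

lemma path_real: "w \<in> W \<Longrightarrow> Diam th \<in> lab (pth w n) \<Longrightarrow> \<exists>j\<ge>n. th \<in> lab (pth w j)"
proof -
  assume w: "w \<in> W" and d: "Diam th \<in> lab (pth w n)"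
  let ?s = "st w n" let ?m = "length ?s"
  have m: "2 \<le> ?m" using st_inv w by blast
  from persist_seq[of "pth w", OF path_W[OF w] path_R[OF w] d, of "?m - 1"]
  show ?thesis
  proof
    assume "\<exists>j. n \<le> j \<and> j \<le> n + (?m - 1) \<and> th \<in> lab (pth w j)"
    then show ?thesis by blast
  next
    assume a: "Diam th \<in> lab (pth w (n + (?m - 1)))"
    have "pth w (n + (?m - 1)) = ?s ! (?m - 1)" unfolding pth_def using st_hd[OF w, of "?m - 1" n] m by simp
    also have "\<dots> = last ?s"
    proof -
      have ne: "?s \<noteq> []" using m by auto
      show ?thesis by (simp add: last_conv_nth[OF ne])
    qed
    finally have pl: "pth w (n + (?m - 1)) = last ?s" .
    have lW: "last ?s \<in> W" using st_inv[OF w, of n] m by (metis last_in_set list.size(3) not_numeral_le_zero subsetD)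
    then obtain v where v: "v \<in> set (blk (last ?s))" "th \<in> lab v" using blk a pl by metis
    then obtain k where k: "k < length (blk (last ?s))" "blk (last ?s) ! k = v" by (metis in_set_conv_nth)
    have e: "st w (n + (?m - 1)) = blk (last ?s)" using st_end[OF w] .
    have "pth w (n + (?m - 1) + k) = v" unfolding pth_def using st_hd[OF w, of k "n + (?m - 1)"] e k by simp
    then show ?thesis using v(2) by (intro exI[of _ "n + (?m - 1) + k"]) auto
  qed
qed

definition X :: "(nat \<Rightarrow> mom) set" where
  "X = {x. (\<forall>i. x i \<in> W \<and> Rm (x i) (x (Suc i))) \<and> (\<forall>i th. Diam th \<in> lab (x i) \<longrightarrow> (\<exists>j\<ge>i. th \<in> lab (x j)))}"

lemma path_X: "w \<in> W \<Longrightarrow> pth w \<in> X"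
  unfolding X_def using path_W path_R path_real by blast

lemma EP:
  assumes x: "x \<in> X" and v: "v \<in> desc (x 0)"
  shows "\<exists>y\<in>X. y 0 = v \<and> (\<forall>i\<le>n. y i \<in> desc (x i))"
proof -
  have xW: "\<And>i. x i \<in> W" and xR: "\<And>i. Rm (x i) (x (Suc i))" using x unfolding X_def by auto
  define vs where "vs = rec_nat v (\<lambda>i u. SOME u'. u' \<in> desc (x (Suc i)) \<and> Rm u u')"
  have vs0: "vs 0 = v" unfolding vs_def by simp
  have vsS: "vs (Suc i) = (SOME u'. u' \<in> desc (x (Suc i)) \<and> Rm (vs i) u')" for i unfolding vs_def by simp
  have vsd: "vs i \<in> desc (x i) \<and> Rm (vs i) (vs (Suc i))" for i
  proof (induction i)
    case 0
    have "\<exists>u'. u' \<in> desc (x (Suc 0)) \<and> Rm (vs 0) u'" using Rm_conf[OF xR[of 0]] v vs0 by blast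
    then show ?case using vs0 v vsS[of 0] someI_ex by (metis (mono_tags, lifting))
  next
    case (Suc i)
    then have d: "vs (Suc i) \<in> desc (x (Suc i))" using vsS[of i] someI_ex Rm_conf[OF xR[of i]]
      by (metis (mono_tags, lifting))
    then have "\<exists>u'. u' \<in> desc (x (Suc (Suc i))) \<and> Rm (vs (Suc i)) u'" using Rm_conf[OF xR[of "Suc i"]] by blast
    then show ?case using d vsS[of "Suc i"] someI_ex by (metis (mono_tags, lifting))
  qed
  have vsW: "vs i \<in> W" for i using vsd W_desc xW by blast
  define z where "z = pth (vs n)"
  have zX: "z \<in> X" and z0: "z 0 = vs n" unfolding z_def using path_X path_0 vsW by auto
  have zW: "\<And>i. z i \<in> W" and zR: "\<And>i. Rm (z i) (z (Suc i))"
    and zr: "\<And>i th. Diam th \<in> lab (z i) \<Longrightarrow> \<exists>j\<ge>i. th \<in> lab (z j)" using zX unfolding X_def by auto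
  define y where "y = (\<lambda>i. if i \<le> n then vs i else z (i - n))"
  have yW: "\<And>i. y i \<in> W" unfolding y_def using vsW zW by auto
  have yR: "Rm (y i) (y (Suc i))" for i
  proof (cases "Suc i \<le> n")
    case True then show ?thesis unfolding y_def using vsd by simp
  next
    case False
    show ?thesis
    proof (cases "i = n")
      case True then show ?thesis unfolding y_def using zR[of 0] z0 by simp
    next
      case False
      then have "i > n" using \<open>\<not> Suc i \<le> n\<close> by simp
      then show ?thesis unfolding y_def using zR[of "i - n"] by (simp add: Suc_diff_le)
    qed
  qed
  have yz: "y (n + j) = z j" for j unfolding y_def using z0 by auto
  have yr: "\<exists>j\<ge>i. th \<in> lab (y j)" if d: "Diam th \<in> lab (y i)" for i th
  proof (cases "i \<le> n")
    case True
    from persist_seq[of y, OF yW yR d, of "n - i"]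
    show ?thesis
    proof
      assume "\<exists>j. i \<le> j \<and> j \<le> i + (n - i) \<and> th \<in> lab (y j)" then show ?thesis by blast
    next
      assume "Diam th \<in> lab (y (i + (n - i)))"
      then have "Diam th \<in> lab (z 0)" using True yz[of 0] by simp
      then obtain j where "th \<in> lab (z j)" using zr by blast
      then show ?thesis using yz[of j] True by (intro exI[of _ "n + j"]) auto
    qed
  next
    case False
    then have "y i = z (i - n)" unfolding y_def by simp
    then obtain j where j: "j \<ge> i - n" "th \<in> lab (z j)" using zr d by metis
    then show ?thesis using yz[of j] False by (intro exI[of _ "n + j"]) auto
  qed
  have "y \<in> X" unfolding X_def using yW yR yr by blast
  moreover have "y 0 = v" unfolding y_def using vs0 by simp
  moreover have "\<forall>i\<le>n. y i \<in> desc (x i)" unfolding y_def using vsd by simp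
  ultimately show ?thesis by blast
qed

end

context ctx
begin

definition Nb :: "(nat \<Rightarrow> mom) \<Rightarrow> nat \<Rightarrow> (nat \<Rightarrow> mom) set" where
  "Nb x n = {y \<in> X. \<forall>i\<le>n. y i \<in> desc (x i)}"

definition opn :: "(nat \<Rightarrow> mom) set \<Rightarrow> bool" where
  "opn U \<longleftrightarrow> U \<subseteq> X \<and> (\<forall>x\<in>U. \<exists>n. Nb x n \<subseteq> U)"

lemma Nb_mono: "m \<le> n \<Longrightarrow> Nb x n \<subseteq> Nb x m"
  unfolding Nb_def by auto

lemma istop: "istopology opn"
  unfolding istopology_def
proof (intro conjI allI impI)
  fix U V assume U: "opn U" and V: "opn V"
  show "opn (U \<inter> V)"
    unfolding opn_def
  proof (intro conjI ballI)
    show "U \<inter> V \<subseteq> X" using U unfolding opn_def by blast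
  next
    fix x assume "x \<in> U \<inter> V"
    then obtain n1 n2 where "Nb x n1 \<subseteq> U" "Nb x n2 \<subseteq> V" using U V unfolding opn_def by blast
    then have "Nb x (max n1 n2) \<subseteq> U \<inter> V" using Nb_mono[of n1 "max n1 n2" x] Nb_mono[of n2 "max n1 n2" x] by auto
    then show "\<exists>n. Nb x n \<subseteq> U \<inter> V" by blast
  qed
next
  fix K assume K: "\<forall>U\<in>K. opn U"
  show "opn (\<Union>K)"
    unfolding opn_def
  proof (intro conjI ballI)
    show "\<Union>K \<subseteq> X" using K unfolding opn_def by blast
  next
    fix x assume "x \<in> \<Union>K"
    then obtain U where "U \<in> K" "x \<in> U" by blast
    then obtain n where "Nb x n \<subseteq> U" using K unfolding opn_def by blast
    then show "\<exists>n. Nb x n \<subseteq> \<Union>K" using \<open>U \<in> K\<close> by blast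
  qed
qed

definition TT :: "(nat \<Rightarrow> mom) topology" where "TT = topology opn"

lemma openin_TT: "openin TT U \<longleftrightarrow> opn U"
  unfolding TT_def using istop by simp

lemma opn_X: "opn X"
  unfolding opn_def Nb_def by blast

lemma topspace_TT: "topspace TT = X"
  unfolding topspace_def openin_TT using opn_X unfolding opn_def by blast

lemma Nb_self: "x \<in> X \<Longrightarrow> x \<in> Nb x n"
  unfolding Nb_def by simp

lemma Nb_open: "opn (Nb x n)"
  unfolding opn_def
proof (intro conjI ballI)
  show "Nb x n \<subseteq> X" unfolding Nb_def by blast
next
  fix y assume y: "y \<in> Nb x n"
  have "Nb y n \<subseteq> Nb x n"
    using y desc_trans unfolding Nb_def by blast
  then show "\<exists>m. Nb y m \<subseteq> Nb x n" by blast
qed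

definition sh :: "(nat \<Rightarrow> mom) \<Rightarrow> (nat \<Rightarrow> mom)" where
  "sh x = (\<lambda>i. x (Suc i))"

lemma sh_X: "x \<in> X \<Longrightarrow> sh x \<in> X"
proof -
  assume x: "x \<in> X"
  have "\<forall>i. x (Suc i) \<in> W \<and> Rm (x (Suc i)) (x (Suc (Suc i)))" using x unfolding X_def by blast
  moreover have "\<exists>j\<ge>i. th \<in> lab (x (Suc j))" if d: "Diam th \<in> lab (x (Suc i))" for i th
  proof -
    obtain j where j: "j \<ge> Suc i" "th \<in> lab (x j)" using x d unfolding X_def by blast
    then obtain j' where "j = Suc j'" by (cases j) auto
    then show ?thesis using j by (intro exI[of _ j']) auto
  qed
  ultimately show ?thesis unfolding X_def sh_def by auto
qed

lemma sh_pow: "(sh ^^ n) x = (\<lambda>i. x (i + n))"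
  by (induction n) (auto simp: sh_def)

lemma sh_cont: "continuous_map TT TT sh"
  unfolding continuous_map_def topspace_TT
proof (intro conjI allI impI)
  show "sh \<in> X \<rightarrow> X" using sh_X by blast
next
  fix U assume "openin TT U"
  then have U: "opn U" using openin_TT by blast
  show "openin TT {x \<in> X. sh x \<in> U}"
    unfolding openin_TT opn_def
  proof (intro conjI ballI)
    show "{x \<in> X. sh x \<in> U} \<subseteq> X" by blast
  next
    fix x assume x: "x \<in> {x \<in> X. sh x \<in> U}"
    then obtain n where n: "Nb (sh x) n \<subseteq> U" using U unfolding opn_def by blast
    have "Nb x (Suc n) \<subseteq> {x \<in> X. sh x \<in> U}"
    proof
      fix y assume y: "y \<in> Nb x (Suc n)"
      then have "sh y \<in> Nb (sh x) n" unfolding Nb_def sh_def using sh_X[of y] by (auto simp: sh_def)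
      then show "y \<in> {x \<in> X. sh x \<in> U}" using n y unfolding Nb_def by blast
    qed
    then show "\<exists>n. Nb x n \<subseteq> {x \<in> X. sh x \<in> U}" by blast
  qed
qed

definition VV :: "nat \<Rightarrow> (nat \<Rightarrow> mom) set" where
  "VV p = {x \<in> X. Var p \<in> lab (x 0)}"

lemma X_W: "x \<in> X \<Longrightarrow> x i \<in> W"
  unfolding X_def by blast

lemma X_R: "x \<in> X \<Longrightarrow> Rm (x i) (x (Suc i))"
  unfolding X_def by blast

lemma Nb_lab: "y \<in> Nb x n \<Longrightarrow> x \<in> X \<Longrightarrow> lab (x 0) \<subseteq> lab (y 0)"
  unfolding Nb_def using W_lab_mono X_W by blast

lemma VV_open: "openin TT (VV p)"
  unfolding openin_TT opn_def
proof (intro conjI ballI)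
  show "VV p \<subseteq> X" unfolding VV_def by blast
next
  fix x assume x: "x \<in> VV p"
  have "Nb x 0 \<subseteq> VV p" using x Nb_lab unfolding VV_def Nb_def by blast
  then show "\<exists>n. Nb x n \<subseteq> VV p" by blast
qed

lemma lab_type: "x \<in> X \<Longrightarrow> \<exists>G. pr G \<and> lab (x i) = G \<inter> S"
  using W_type X_W by blast

lemma truth: "th \<in> S \<Longrightarrow> sem TT sh VV th = {x \<in> X. th \<in> lab (x 0)}"
proof (induction th)
  case (Var p)
  then show ?case unfolding VV_def by simp
next
  case Bot
  have "Bot \<notin> lab (x 0)" if "x \<in> X" for x using lab_type[OF that, of 0] pr_bot by blast
  then show ?case by auto
next
  case (And a b)
  have ab: "a \<in> S" "b \<in> S" using sub_and[OF And.prems] by auto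
  have "And a b \<in> lab (x 0) \<longleftrightarrow> a \<in> lab (x 0) \<and> b \<in> lab (x 0)" if "x \<in> X" for x
    using lab_type[OF that, of 0] pr_and ab And.prems by blast
  then show ?case using And ab by auto
next
  case (Or a b)
  have ab: "a \<in> S" "b \<in> S" using sub_or[OF Or.prems] by auto
  have "Or a b \<in> lab (x 0) \<longleftrightarrow> a \<in> lab (x 0) \<or> b \<in> lab (x 0)" if "x \<in> X" for x
    using lab_type[OF that, of 0] pr_or ab Or.prems by blast
  then show ?case using Or ab by auto
next
  case (Imp a b)
  have ab: "a \<in> S" "b \<in> S" using sub_imp[OF Imp.prems] by auto
  have A: "sem TT sh VV a = {x \<in> X. a \<in> lab (x 0)}" and B: "sem TT sh VV b = {x \<in> X. b \<in> lab (x 0)}"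
    using Imp ab by auto
  show ?case
  proof
    show "sem TT sh VV (Imp a b) \<subseteq> {x \<in> X. Imp a b \<in> lab (x 0)}"
    proof
      fix x assume "x \<in> sem TT sh VV (Imp a b)"
      then obtain Op where Op: "openin TT Op" "x \<in> Op" "Op \<subseteq> (X - {x \<in> X. a \<in> lab (x 0)}) \<union> {x \<in> X. b \<in> lab (x 0)}"
        using A B topspace_TT by (auto simp: interior_of_def)
      then have xX: "x \<in> X" using openin_TT opn_def by blast
      obtain n where n: "Nb x n \<subseteq> Op" using Op openin_TT opn_def by blast
      show "x \<in> {x \<in> X. Imp a b \<in> lab (x 0)}"
      proof (rule ccontr)
        assume "x \<notin> {x \<in> X. Imp a b \<in> lab (x 0)}"
        then have ni: "Imp a b \<notin> lab (x 0)" using xX by blast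
        have "impc (x 0)" using X_W[OF xX] unfolding W_def by blast
        then obtain v where v: "v \<in> desc (x 0)" "a \<in> lab v" "b \<notin> lab v"
          using ni Imp.prems desc_self[of "x 0"] unfolding impc_def by blast
        then obtain y where y: "y \<in> X" "y 0 = v" "\<forall>i\<le>n. y i \<in> desc (x i)" using EP[OF xX] by blast
        then have "y \<in> Nb x n" unfolding Nb_def by blast
        then have "y \<in> Op" using n by blast
        then show False using Op(3) y v by auto
      qed
    qed
  next
    show "{x \<in> X. Imp a b \<in> lab (x 0)} \<subseteq> sem TT sh VV (Imp a b)"
    proof
      fix x assume x: "x \<in> {x \<in> X. Imp a b \<in> lab (x 0)}"
      have "Nb x 0 \<subseteq> (X - {x \<in> X. a \<in> lab (x 0)}) \<union> {x \<in> X. b \<in> lab (x 0)}"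
      proof
        fix y assume y: "y \<in> Nb x 0"
        then have yX: "y \<in> X" unfolding Nb_def by blast
        have "Imp a b \<in> lab (y 0)" using Nb_lab y x by blast
        moreover obtain G where "pr G" "lab (y 0) = G \<inter> S" using lab_type[OF yX] by blast
        ultimately have "a \<in> lab (y 0) \<longrightarrow> b \<in> lab (y 0)" using pr_mp ab by blast
        then show "y \<in> (X - {x \<in> X. a \<in> lab (x 0)}) \<union> {x \<in> X. b \<in> lab (x 0)}" using yX by blast
      qed
      moreover have "openin TT (Nb x 0)" using Nb_open openin_TT by blast
      moreover have "x \<in> Nb x 0" using Nb_self x by blast
      ultimately show "x \<in> sem TT sh VV (Imp a b)"
        using A B topspace_TT by (auto simp: interior_of_def)
    qed
  qed
next
  case (Next a)
  have aS: "a \<in> S" using sub_next[OF Next.prems] by auto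
  have "Next a \<in> lab (x 0) \<longleftrightarrow> a \<in> lab (sh x 0)" if "x \<in> X" for x
    using Rm_compat[OF X_R[OF that, of 0]] Next.prems unfolding compat_def sh_def by auto
  then show ?case using Next aS sh_X topspace_TT by (auto simp: sh_def)
next
  case (Diam a)
  have aS: "a \<in> S" using sub_diam[OF Diam.prems] by auto
  have bk: "Diam a \<in> lab (x 0)" if x: "x \<in> X" "a \<in> lab (x n)" for x n
  proof -
    obtain G where "pr G" "lab (x n) = G \<inter> S" using lab_type[OF x(1)] by blast
    then have "Diam a \<in> lab (x n)" using x(2) pr_diam_intro Diam.prems by blast
    moreover have "Diam a \<in> lab (x (Suc k)) \<Longrightarrow> Diam a \<in> lab (x k)" for k
      using Rm_compat[OF X_R[OF x(1), of k]] Diam.prems unfolding compat_def by blast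
    ultimately show ?thesis by (induction n) auto
  qed
  have "(\<exists>n. a \<in> lab (x n)) \<longleftrightarrow> Diam a \<in> lab (x 0)" if "x \<in> X" for x
    using bk[OF that] that unfolding X_def by blast
  moreover have "(sh ^^ n) x \<in> X" if "x \<in> X" for x n
    using that sh_X by (induction n) auto
  ultimately show ?case using Diam aS topspace_TT by (auto simp: sh_pow)
qed

end

lemma sem_sub:
  assumes "\<forall>p. openin T (V p)" "continuous_map T T f"
  shows "sem T f V phi \<subseteq> topspace T"
proof (induction phi)
  case (Var p) then show ?case using assms openin_subset by auto
next
  case (Imp a b) then show ?case using interior_of_subset_topspace by simp
qed auto

lemma transfer_model:
  fixes T :: "'b topology" and h :: "'b \<Rightarrow> 'a"
  assumes inj: "inj_on h (topspace T)" and cont: "continuous_map T T f" and V: "\<forall>p. openin T (V p)"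
  shows "\<exists>T' f' V'. dynamical_system T' f' \<and> (\<forall>p. openin T' (V' p)) \<and>
          (\<forall>phi. sem T' f' V' phi = h ` sem T f V phi) \<and> topspace T' = h ` topspace T"
proof -
  define opn' where "opn' = (\<lambda>U. \<exists>O'. openin T O' \<and> U = h ` O')"
  have ist: "istopology opn'"
    unfolding istopology_def
  proof (intro conjI allI impI)
    fix U1 U2 assume "opn' U1" "opn' U2"
    then obtain O1 O2 where O: "openin T O1" "U1 = h ` O1" "openin T O2" "U2 = h ` O2" unfolding opn'_def by blast
    then have "U1 \<inter> U2 = h ` (O1 \<inter> O2)"
      using inj_on_image_Int[OF inj] openin_subset by metis
    then show "opn' (U1 \<inter> U2)" unfolding opn'_def using O by blast
  next
    fix K assume K: "\<forall>U\<in>K. opn' U"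
    define Ks where "Ks = {O'. openin T O' \<and> h ` O' \<in> K}"
    have "\<Union>K = h ` \<Union>Ks"
    proof
      show "\<Union>K \<subseteq> h ` \<Union>Ks"
      proof
        fix a assume "a \<in> \<Union>K"
        then obtain U where U: "U \<in> K" "a \<in> U" by blast
        then obtain O' where "openin T O'" "U = h ` O'" using K unfolding opn'_def by blast
        then show "a \<in> h ` \<Union>Ks" using U unfolding Ks_def by blast
      qed
    next
      show "h ` \<Union>Ks \<subseteq> \<Union>K" unfolding Ks_def by blast
    qed
    moreover have "openin T (\<Union>Ks)" unfolding Ks_def by auto
    ultimately show "opn' (\<Union>K)" unfolding opn'_def by blast
  qed
  define T' where "T' = topology opn'"
  have oT': "openin T' U \<longleftrightarrow> opn' U" for U unfolding T'_def using ist by simp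
  have tT': "topspace T' = h ` topspace T"
  proof -
    have "opn' (h ` topspace T)" unfolding opn'_def by blast
    moreover have "opn' U \<Longrightarrow> U \<subseteq> h ` topspace T" for U unfolding opn'_def using openin_subset by blast
    ultimately show ?thesis unfolding topspace_def oT' by blast
  qed
  define g where "g = the_inv_into (topspace T) h"
  have gh: "g (h x) = x" if "x \<in> topspace T" for x
    unfolding g_def using the_inv_into_f_f[OF inj that] .
  define f' where "f' = (\<lambda>a. h (f (g a)))"
  have fmap: "f x \<in> topspace T" if "x \<in> topspace T" for x
    using cont that unfolding continuous_map_def by blast
  have f'h: "f' (h x) = h (f x)" if "x \<in> topspace T" for x
    unfolding f'_def using gh that by simp
  define V' where "V' = (\<lambda>p. h ` V p)"
  have hin: "h x \<in> h ` A \<longleftrightarrow> x \<in> A" if "x \<in> topspace T" "A \<subseteq> topspace T" for x A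
    using inj that unfolding inj_on_def by blast
  have interior: "T' interior_of (h ` C) = h ` (T interior_of C)" if C: "C \<subseteq> topspace T" for C
  proof
    show "T' interior_of h ` C \<subseteq> h ` (T interior_of C)"
    proof
      fix a assume "a \<in> T' interior_of h ` C"
      then obtain U where U: "openin T' U" "a \<in> U" "U \<subseteq> h ` C" unfolding interior_of_def by blast
      then obtain O' where O': "openin T O'" "U = h ` O'" using oT' unfolding opn'_def by blast
      have "O' \<subseteq> C"
      proof
        fix z assume z: "z \<in> O'"
        then have "h z \<in> h ` C" using U O' by blast
        moreover have "z \<in> topspace T" using z O' openin_subset by blast
        ultimately show "z \<in> C" using hin C by blast
      qed
      then have "O' \<subseteq> T interior_of C" using O' unfolding interior_of_def by blast
      then show "a \<in> h ` (T interior_of C)" using U O' by blast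
    qed
  next
    show "h ` (T interior_of C) \<subseteq> T' interior_of h ` C"
    proof
      fix a assume "a \<in> h ` (T interior_of C)"
      then obtain x O' where x: "a = h x" "openin T O'" "x \<in> O'" "O' \<subseteq> C" unfolding interior_of_def by blast
      then have "openin T' (h ` O')" using oT' unfolding opn'_def by blast
      then show "a \<in> T' interior_of h ` C" using x unfolding interior_of_def by blast
    qed
  qed
  have fpow: "(f' ^^ n) (h x) = h ((f ^^ n) x)" "(f ^^ n) x \<in> topspace T" if "x \<in> topspace T" for x n
  proof -
    have "(f' ^^ n) (h x) = h ((f ^^ n) x) \<and> (f ^^ n) x \<in> topspace T"
      by (induction n) (auto simp: that f'h fmap)
    then show "(f' ^^ n) (h x) = h ((f ^^ n) x)" "(f ^^ n) x \<in> topspace T" by auto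
  qed
  have sem_eq: "sem T' f' V' phi = h ` sem T f V phi" for phi
  proof (induction phi)
    case (Var p) then show ?case unfolding V'_def by simp
  next
    case Bot then show ?case by simp
  next
    case (And a b)
    then show ?case using inj_on_image_Int[OF inj] sem_sub[OF V cont] by simp
  next
    case (Or a b)
    then show ?case by (simp add: image_Un)
  next
    case (Imp a b)
    have s: "sem T f V a \<subseteq> topspace T" "sem T f V b \<subseteq> topspace T" using sem_sub[OF V cont] by auto
    have "topspace T' - sem T' f' V' a \<union> sem T' f' V' b = h ` (topspace T - sem T f V a \<union> sem T f V b)"
      using Imp tT' inj_on_image_set_diff[OF inj] s by (simp add: image_Un)
    then show ?case using interior s by auto
  next
    case (Next a)
    have s: "sem T f V a \<subseteq> topspace T" using sem_sub[OF V cont] by auto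
    have "{y \<in> topspace T'. f' y \<in> h ` sem T f V a} = h ` {x \<in> topspace T. f x \<in> sem T f V a}"
    proof
      show "{y \<in> topspace T'. f' y \<in> h ` sem T f V a} \<subseteq> h ` {x \<in> topspace T. f x \<in> sem T f V a}"
      proof
        fix y assume y: "y \<in> {y \<in> topspace T'. f' y \<in> h ` sem T f V a}"
        then obtain x where x: "x \<in> topspace T" "y = h x" using tT' by auto
        then have "h (f x) \<in> h ` sem T f V a" using y f'h by auto
        then have "f x \<in> sem T f V a" using hin[OF fmap[OF x(1)] s] by blast
        then show "y \<in> h ` {x \<in> topspace T. f x \<in> sem T f V a}" using x by blast
      qed
      show "h ` {x \<in> topspace T. f x \<in> sem T f V a} \<subseteq> {y \<in> topspace T'. f' y \<in> h ` sem T f V a}"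
        using tT' f'h by auto
    qed
    then show ?case using Next by simp
  next
    case (Diam a)
    have s: "sem T f V a \<subseteq> topspace T" using sem_sub[OF V cont] by auto
    have "{y \<in> topspace T'. (f' ^^ n) y \<in> h ` sem T f V a} = h ` {x \<in> topspace T. (f ^^ n) x \<in> sem T f V a}" for n
    proof
      show "{y \<in> topspace T'. (f' ^^ n) y \<in> h ` sem T f V a} \<subseteq> h ` {x \<in> topspace T. (f ^^ n) x \<in> sem T f V a}"
      proof
        fix y assume y: "y \<in> {y \<in> topspace T'. (f' ^^ n) y \<in> h ` sem T f V a}"
        then obtain x where x: "x \<in> topspace T" "y = h x" using tT' by auto
        then have "h ((f ^^ n) x) \<in> h ` sem T f V a" using y fpow by auto
        then have "(f ^^ n) x \<in> sem T f V a" using hin[OF fpow(2)[OF x(1)] s] by blast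
        then show "y \<in> h ` {x \<in> topspace T. (f ^^ n) x \<in> sem T f V a}" using x by blast
      qed
      show "h ` {x \<in> topspace T. (f ^^ n) x \<in> sem T f V a} \<subseteq> {y \<in> topspace T'. (f' ^^ n) y \<in> h ` sem T f V a}"
        using tT' fpow by auto
    qed
    then show ?case using Diam by (simp add: image_UN)
  qed
  have "continuous_map T' T' f'"
    unfolding continuous_map_def
  proof (intro conjI allI impI)
    show "f' \<in> topspace T' \<rightarrow> topspace T'" using tT' f'h fmap by auto
  next
    fix U assume "openin T' U"
    then obtain O' where O': "openin T O'" "U = h ` O'" using oT' unfolding opn'_def by blast
    have s: "O' \<subseteq> topspace T" using O' openin_subset by blast
    have "{y \<in> topspace T'. f' y \<in> U} = h ` {x \<in> topspace T. f x \<in> O'}"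
    proof
      show "{y \<in> topspace T'. f' y \<in> U} \<subseteq> h ` {x \<in> topspace T. f x \<in> O'}"
      proof
        fix y assume y: "y \<in> {y \<in> topspace T'. f' y \<in> U}"
        then obtain x where x: "x \<in> topspace T" "y = h x" using tT' by auto
        then have "h (f x) \<in> h ` O'" using y f'h O' by auto
        then have "f x \<in> O'" using hin[OF fmap[OF x(1)] s] by blast
        then show "y \<in> h ` {x \<in> topspace T. f x \<in> O'}" using x by blast
      qed
      show "h ` {x \<in> topspace T. f x \<in> O'} \<subseteq> {y \<in> topspace T'. f' y \<in> U}"
        using tT' f'h O' by auto
    qed
    moreover have "openin T {x \<in> topspace T. f x \<in> O'}" using cont O' unfolding continuous_map_def by blast
    ultimately show "openin T' {y \<in> topspace T'. f' y \<in> U}" using oT' unfolding opn'_def by blast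
  qed
  moreover have "\<forall>p. openin T' (V' p)" using oT' V unfolding opn'_def V'_def by blast
  ultimately show ?thesis unfolding dynamical_system_def using sem_eq tT' by blast
qed

primrec subs :: "fm \<Rightarrow> fm set" where
  "subs (Var p) = {Var p}"
| "subs Bot = {Bot}"
| "subs (And a b) = insert (And a b) (subs a \<union> subs b)"
| "subs (Or a b) = insert (Or a b) (subs a \<union> subs b)"
| "subs (Imp a b) = insert (Imp a b) (subs a \<union> subs b)"
| "subs (Next a) = insert (Next a) (subs a)"
| "subs (Diam a) = insert (Diam a) (subs a)"

lemma subs_self: "phi \<in> subs phi"
  by (cases phi) auto

lemma subs_trans: "x \<in> subs phi \<Longrightarrow> subs x \<subseteq> subs phi"
  by (induction phi) auto

lemma finite_subs: "finite (subs phi)"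
  by (induction phi) auto

lemma ctx_subs: "set sl = subs phi \<Longrightarrow> ctx (subs phi) sl"
  unfolding ctx_def using subs_trans subs_self by fastforce

theorem theorem8p4:
  fixes \<phi> :: fm
  assumes big: "\<exists>g :: nat set set \<Rightarrow> 'a. inj g"
    and valid: "valid_over TYPE('a) \<phi>"
  shows "prov \<phi>"
proof (rule ccontr)
  assume np: "\<not> prov \<phi>"
  obtain sl where sl: "set sl = subs \<phi>" using finite_list[OF finite_subs[of \<phi>]] by blast
  interpret I: ctx "subs \<phi>" sl using ctx_subs[OF sl] .
  obtain G0 where G0: "pr G0" "\<phi> \<notin> G0" using exists_pr_not np by blast
  obtain w0 where w0: "w0 \<in> I.W" "lab w0 = G0 \<inter> subs \<phi>" using I.init_mom G0 by blast
  have x0: "I.pth w0 \<in> I.X" "I.pth w0 0 = w0" using I.path_X I.path_0 w0 by auto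
  have tr: "sem I.TT I.sh I.VV \<phi> = {x \<in> I.X. \<phi> \<in> lab (x 0)}" using I.truth subs_self by blast
  have notin: "I.pth w0 \<notin> sem I.TT I.sh I.VV \<phi>" using tr x0 w0 G0 by auto
  obtain g :: "nat set set \<Rightarrow> 'a" where g: "inj g" using big by blast
  obtain idx :: "mom \<Rightarrow> nat" where idx: "inj_on idx I.W" using finite_imp_inj_to_nat_seg[OF I.finite_W] by blast
  define enc where "enc = (\<lambda>x :: nat \<Rightarrow> mom. {prod_encode (i, idx (x i)) | i. True})"
  define h where "h = (\<lambda>x. g {enc x})"
  have injh: "inj_on h I.X"
  proof
    fix x y assume x: "x \<in> I.X" and y: "y \<in> I.X" and e: "h x = h y"
    then have "enc x = enc y" unfolding h_def using g unfolding inj_def by blast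
    have "x i = y i" for i
    proof -
      have "prod_encode (i, idx (x i)) \<in> enc y" using \<open>enc x = enc y\<close> unfolding enc_def by blast
      then obtain j where "prod_encode (i, idx (x i)) = prod_encode (j, idx (y j))" unfolding enc_def by blast
      then have "i = j" "idx (x i) = idx (y j)" using prod_encode_eq by auto
      then show "x i = y i" using idx I.X_W x y unfolding inj_on_def by metis
    qed
    then show "x = y" by blast
  qed
  have cont: "continuous_map I.TT I.TT I.sh" using I.sh_cont .
  have V: "\<forall>p. openin I.TT (I.VV p)" using I.VV_open by blast
  obtain T' f' V' where M: "dynamical_system T' f'" "\<forall>p. openin T' (V' p)"
    "\<forall>phi. sem T' f' V' phi = h ` sem I.TT I.sh I.VV phi" "topspace T' = h ` topspace I.TT"
    using transfer_model[OF _ cont V, of h] injh I.topspace_TT by metis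
  have "sem T' f' V' \<phi> = topspace T'" using valid M(1,2) unfolding valid_over_def by blast
  then have "h ` sem I.TT I.sh I.VV \<phi> = h ` I.X" using M(3,4) I.topspace_TT by simp
  moreover have "sem I.TT I.sh I.VV \<phi> \<subseteq> I.X" using sem_sub[OF V cont] I.topspace_TT by simp
  ultimately have "sem I.TT I.sh I.VV \<phi> = I.X" using inj_on_image_eq_iff[OF injh] by blast
  then show False using notin x0 by blast
qed

end
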